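(* Let $d,n\in\mathbb{N}_{\ge1}$. For any ReLU FNN $f_{FF}:\mathbb{R}^{dn}\to\mathbb{R}$ with depth $L$, width $W$ and weight bound $B$, there exists a Transformer $\boldsymbol T^{(FF)}:\mathbb{R}^{(d+n)\times n}\to\mathbb{R}^{1\times n}$ of length $1$ with size $\{(L_0,W_0),(H_1,S_1),(L_1,W_1)\}=\{(2,2dn),(1,dn),(L,\max\{W,2dn\})\}$ and dimension vector $(d+n,d+n,2dn,1)$ such that for any $\boldsymbol X\in[0,1]^{d\times n}$, $$\boldsymbol T^{(FF)}\left(\begin{pmatrix}\boldsymbol X\\ \boldsymbol I_{n\times n}-\boldsymbol 1_{n\times n}\end{pmatrix}\right)=f_{FF}(\boldsymbol X^{(flt)})\boldsymbol 1_{1\times n},$$ where $\boldsymbol X^{(flt)}=(x_{11},\dots,x_{1n},x_{21},\dots,x_{2n},\dots,x_{d1},\dots,x_{dn})^\top\in\mathbb{R}^{dn}$. Furthermore, $B_{FF}=\max\{B,1\}$ and $B_{SA}=n$.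
   Context: $\boldsymbol 1_{n\times n}$ is the all-ones matrix. ReLU FNN of depth $L$, width $W$: $f_0=x$, $f_l=\sigma_R(W_lf_{l-1}+b_l)$ ($1\le l\le L-1$), $f=W_Lf_{L-1}+b_L$ with hidden width $W$, $\sigma_R(x)=\max\{x,0\}$; weight bound = max absolute parameter value. Transformers: a feedforward block applies such a net column-wise; a self-attention layer on $\mathbb{R}^{D\times n}$ with $H$ heads of size $S$ is $X\mapsto X+\sum_{h=1}^HW_O^{(h)}W_V^{(h)}X\sigma_S(X^\top W_K^{(h)\top}W_Q^{(h)}X)$ with $W_O^{(h)}\in\mathbb{R}^{D\times S}$, $W_V^{(h)},W_K^{(h)},W_Q^{(h)}\in\mathbb{R}^{S\times D}$ and $\sigma_S$ the column-wise softmax; embedding layer $X\mapsto W_{EB}X+B_{EB}$. A Transformer of length $K$ is $\mathcal F_{FF}^{(K)}\circ\mathcal F_{SA}^{(K)}\circ\cdots\circ\mathcal F_{SA}^{(1)}\circ\mathcal F_{FF}^{(0)}\circ\mathcal F_{EB}$; size lists depths/widths $(L_k,W_k)$ of $\mathcal F_{FF}^{(k)}$ and head numbers/sizes $(H_k,S_k)$ of $\mathcal F_{SA}^{(k)}$; dimension vector $(d_{in},d_0,\dots,d_K,d_{out})$ means $\mathcal F_{EB}:\mathbb{R}^{d_{in}\times n}\to\mathbb{R}^{d_0\times n}$, $\mathcal F_{FF}^{(k)}:\mathbb{R}^{d_k\times n}\to\mathbb{R}^{d_{k+1}\times n}$ ($d_{K+1}=d_{out}$), $\mathcal F_{SA}^{(k)}$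 on $\mathbb{R}^{d_k\times n}$. $B_{FF},B_{SA}$ bound absolute values of parameters of feedforward blocks and attention layers. *)

theory Defs
  imports Complex_Main
begin

text \<open>Vectors are functions nat => real (coordinates 0..k-1 meaningful),
  matrices are functions nat => nat => real (row index, column index).\<close>

type_synonym vec = "nat \<Rightarrow> real"
type_synonym mat = "nat \<Rightarrow> nat \<Rightarrow> real"

definition relu :: "real \<Rightarrow> real" where
  "relu x = max x 0"

definition affine :: "nat \<Rightarrow> mat \<Rightarrow> vec \<Rightarrow> vec \<Rightarrow> vec" where
  "affine k A b x = (\<lambda>i. (\<Sum>j<k. A i j * x j) + b i)"

fun fnn_eval :: "nat list \<Rightarrow> (mat \<times> vec) list \<Rightarrow> vec \<Rightarrow> vec" where
  "fnn_eval (k # ds) ((A, b) # ls) x =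
     (if ls = [] then affine k A b x
      else fnn_eval ds ls (\<lambda>i. relu (affine k A b x i)))"
| "fnn_eval _ _ x = x"

definition is_fnn :: "nat list \<Rightarrow> (mat \<times> vec) list \<Rightarrow> nat \<Rightarrow> nat \<Rightarrow> nat \<Rightarrow> nat \<Rightarrow> real \<Rightarrow> bool" where
  "is_fnn ds ls L W din dout B \<longleftrightarrow>
     L \<ge> 1 \<and> length ls = L \<and> length ds = L + 1 \<and>
     ds ! 0 = din \<and> ds ! L = dout \<and>
     (\<forall>l. 0 < l \<and> l < L \<longrightarrow> ds ! l = W) \<and>
     (\<forall>l<L. \<forall>i<ds ! (l+1).
        (\<forall>j<ds ! l. \<bar>fst (ls ! l) i j\<bar> \<le> B) \<and> \<bar>snd (ls ! l) i\<bar> \<le> B)"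

definition ff_block :: "nat list \<Rightarrow> (mat \<times> vec) list \<Rightarrow> mat \<Rightarrow> mat" where
  "ff_block ds ls X = (\<lambda>i j. fnn_eval ds ls (\<lambda>r. X r j) i)"

definition mmul :: "nat \<Rightarrow> mat \<Rightarrow> mat \<Rightarrow> mat" where
  "mmul k A B = (\<lambda>i j. \<Sum>l<k. A i l * B l j)"

definition transp :: "mat \<Rightarrow> mat" where
  "transp A = (\<lambda>i j. A j i)"

definition softmax_col :: "nat \<Rightarrow> mat \<Rightarrow> mat" where
  "softmax_col n A = (\<lambda>i j. exp (A i j) / (\<Sum>i'<n. exp (A i' j)))"

definition self_attn :: "nat \<Rightarrow> nat \<Rightarrow> nat \<Rightarrow> (mat \<times> mat \<times> mat \<times> mat) list \<Rightarrow> mat \<Rightarrow> mat" where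
  "self_attn D S n heads X = (\<lambda>i j. X i j +
     (\<Sum>h<length heads. case heads ! h of (WO, WV, WK, WQ) \<Rightarrow>
        mmul n (mmul S WO (mmul D WV X))
          (softmax_col n (mmul S (transp (mmul D WK X)) (mmul D WQ X))) i j))"

definition heads_bounded :: "nat \<Rightarrow> nat \<Rightarrow> (mat \<times> mat \<times> mat \<times> mat) list \<Rightarrow> real \<Rightarrow> bool" where
  "heads_bounded D S heads Bd \<longleftrightarrow>
     (\<forall>h<length heads. case heads ! h of (WO, WV, WK, WQ) \<Rightarrow>
        (\<forall>i<D. \<forall>s<S. \<bar>WO i s\<bar> \<le> Bd) \<and>
        (\<forall>s<S. \<forall>i<D. \<bar>WV s i\<bar> \<le> Bd \<and> \<bar>WK s i\<bar> \<le> Bd \<and> \<bar>WQ s i\<bar> \<le> Bd))"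

definition embed :: "nat \<Rightarrow> mat \<Rightarrow> mat \<Rightarrow> mat \<Rightarrow> mat" where
  "embed din WEB BEB X = (\<lambda>i j. (\<Sum>k<din. WEB i k * X k j) + BEB i j)"

definition transformer1 ::
  "nat \<Rightarrow> nat \<Rightarrow> nat \<Rightarrow> nat \<Rightarrow> mat \<Rightarrow> mat \<Rightarrow> nat list \<Rightarrow> (mat \<times> vec) list \<Rightarrow>
   (mat \<times> mat \<times> mat \<times> mat) list \<Rightarrow> nat list \<Rightarrow> (mat \<times> vec) list \<Rightarrow> mat \<Rightarrow> mat" where
  "transformer1 din D S n WEB BEB ds0 ls0 heads ds1 ls1 X =
     ff_block ds1 ls1 (self_attn D S n heads (ff_block ds0 ls0 (embed din WEB BEB X)))"

definition stack_input :: "nat \<Rightarrow> mat \<Rightarrow> mat" where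
  "stack_input d X = (\<lambda>i j. if i < d then X i j else (if i - d = j then 1 else 0) - 1)"

text \<open>Row-major flattening: entry (i,j) (0-based) goes to coordinate i*n + j.\<close>
definition flatten :: "nat \<Rightarrow> mat \<Rightarrow> vec" where
  "flatten n X = (\<lambda>k. X (k div n) (k mod n))"

end

theory Submission
  imports Defs
begin

fun pad_layers :: "nat list \<Rightarrow> (mat \<times> vec) list \<Rightarrow> (mat \<times> vec) list" where
  "pad_layers (k # k2 # ks) ((A, b) # ls) =
     ((\<lambda>i j. if i < k2 \<and> j < k then A i j else 0), (\<lambda>i. if i < k2 then b i else 0))
       # pad_layers (k2 # ks) ls"
| "pad_layers _ _ = []"

lemma pad_len: "length ds = length ls + 1 \<Longrightarrow> length (pad_layers ds ls) = length ls"
  by (induction ds ls rule: pad_layers.induct) auto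

lemma pad_nth_all: "length ds = length ls + 1 \<Longrightarrow> \<forall>l < length ls.
  pad_layers ds ls ! l = ((\<lambda>i j. if i < ds!(l+1) \<and> j < ds!l then fst (ls!l) i j else 0),
                          (\<lambda>i. if i < ds!(l+1) then snd (ls!l) i else 0))"
proof (induction ds ls rule: pad_layers.induct)
  case (1 k k2 ks A b ls)
  show ?case
  proof (intro allI impI)
    fix l assume "l < length ((A, b) # ls)"
    then show "pad_layers (k # k2 # ks) ((A, b) # ls) ! l = ((\<lambda>i j. if i < (k # k2 # ks)!(l+1) \<and> j < (k # k2 # ks)!l then fst (((A, b) # ls)!l) i j else 0),
                          (\<lambda>i. if i < (k # k2 # ks)!(l+1) then snd (((A, b) # ls)!l) i else 0))"
      using 1 by (cases l) (simp_all only: nth_Cons_0 nth_Cons_Suc fst_conv snd_conv pad_layers.simps, auto)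
  qed
qed auto

lemma pad_nth: "length ds = length ls + 1 \<Longrightarrow> l < length ls \<Longrightarrow>
  pad_layers ds ls ! l = ((\<lambda>i j. if i < ds!(l+1) \<and> j < ds!l then fst (ls!l) i j else 0),
                          (\<lambda>i. if i < ds!(l+1) then snd (ls!l) i else 0))"
  using pad_nth_all by blast

lemma sum_restrict_lt:
  fixes g :: "nat \<Rightarrow> real"
  assumes "k \<le> k'"
  shows "(\<Sum>j<k'. if j < k then g j else 0) = (\<Sum>j<k. g j)"
proof -
  have "(\<Sum>j<k'. if j < k then g j else 0) = (\<Sum>j\<in>{..<k'} \<inter> {..<k}. g j)"
    by (simp add: sum.inter_restrict)
  also have "{..<k'} \<inter> {..<k} = {..<k}" using assms by auto
  finally show ?thesis .
qed

lemma pad_affine: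
  assumes "k \<le> k'" "\<forall>j<k. x' j = x j" "i < k2"
  shows "affine k' (\<lambda>i j. if i < k2 \<and> j < k then A i j else 0) (\<lambda>i. if i < k2 then b i else 0) x' i
       = affine k A b x i"
proof -
  have "(\<Sum>j<k'. (if i < k2 \<and> j < k then A i j else 0) * x' j)
      = (\<Sum>j<k'. if j < k then A i j * x j else 0)"
    using assms by (intro sum.cong) auto
  also have "\<dots> = (\<Sum>j<k. A i j * x j)" using sum_restrict_lt[OF assms(1)] .
  finally show ?thesis using assms unfolding affine_def by simp
qed

lemma pad_eval:
  "length ds = length ls + 1 \<Longrightarrow> length ds' = length ds \<Longrightarrow> (\<forall>l<length ds. ds!l \<le> ds'!l) \<Longrightarrow>
   (\<forall>j<ds!0. x' j = x j) \<Longrightarrow> i < last ds \<Longrightarrow>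
   fnn_eval ds' (pad_layers ds ls) x' i = fnn_eval ds ls x i"
proof (induction ls arbitrary: ds ds' x x' i)
  case Nil
  then obtain k where ds: "ds = [k]" by (cases ds) auto
  from Nil obtain k' where ds': "ds' = [k']" by (cases ds') (auto simp: ds)
  show ?case using Nil by (simp add: ds ds')
next
  case (Cons p ls)
  obtain A b where p: "p = (A, b)" by (cases p)
  obtain k k2 ks where ds: "ds = k # k2 # ks"
    using Cons.prems(1) by (cases ds; cases "tl ds") auto
  obtain k' k2' ks' where ds': "ds' = k' # k2' # ks'"
    using Cons.prems(2) ds by (cases ds'; cases "tl ds'") auto
  have le0: "k \<le> k'" using Cons.prems(3) by (auto simp: ds ds' dest: spec[of _ 0])
  have agree: "\<forall>j<k. x' j = x j" using Cons.prems(4) by (simp add: ds)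
  have aff: "\<And>i. i < k2 \<Longrightarrow> affine k' (\<lambda>i j. if i < k2 \<and> j < k then A i j else 0) (\<lambda>i. if i < k2 then b i else 0) x' i
       = affine k A b x i" using pad_affine[OF le0 agree] by blast
  show ?case
  proof (cases "ls = []")
    case True
    then show ?thesis using Cons.prems aff by (simp add: ds ds' p)
  next
    case False
    have lenp: "length (pad_layers (k2 # ks) ls) = length ls"
      using Cons.prems(1) by (intro pad_len) (simp add: ds)
    hence ne: "pad_layers (k2 # ks) ls \<noteq> []" using False by auto
    have IH: "fnn_eval (k2' # ks') (pad_layers (k2 # ks) ls)
       (\<lambda>i. relu (affine k' (\<lambda>i j. if i < k2 \<and> j < k then A i j else 0) (\<lambda>i. if i < k2 then b i else 0) x' i)) i
       = fnn_eval (k2 # ks) ls (\<lambda>i. relu (affine k A b x i)) i"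
    proof (rule Cons.IH)
      show "length (k2 # ks) = length ls + 1" using Cons.prems(1) by (simp add: ds)
      show "length (k2' # ks') = length (k2 # ks)" using Cons.prems(2) by (simp add: ds ds')
      show "\<forall>l<length (k2 # ks). (k2 # ks) ! l \<le> (k2' # ks') ! l"
      proof (intro allI impI)
        fix l assume "l < length (k2 # ks)"
        then show "(k2 # ks) ! l \<le> (k2' # ks') ! l"
          using Cons.prems(3) by (auto simp: ds ds' dest: spec[of _ "Suc l"])
      qed
      show "\<forall>j<(k2 # ks) ! 0. relu (affine k' (\<lambda>i j. if i < k2 \<and> j < k then A i j else 0) (\<lambda>i. if i < k2 then b i else 0) x' j) = relu (affine k A b x j)"
        using aff by simp
      show "i < last (k2 # ks)" using Cons.prems(5) by (simp add: ds)
    qed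
    show ?thesis using IH False ne by (simp add: ds ds' p)
  qed
qed


lemma sum_two:
  fixes f :: "nat \<Rightarrow> real"
  assumes "a \<noteq> b" "a < k" "b < k"
  shows "(\<Sum>r<k. (if r = a \<or> r = b then 1 else 0) * f r) = f a + f b"
proof -
  have "(\<Sum>r<k. (if r = a \<or> r = b then 1 else 0) * f r) = (\<Sum>r<k. (if r = a then f r else 0) + (if r = b then f r else 0))"
    using assms(1) by (intro sum.cong) auto
  also have "\<dots> = f a + f b" using assms by (simp add: sum.distrib)
  finally show ?thesis .
qed

lemma sum_delta_lt:
  fixes f :: "nat \<Rightarrow> real"
  assumes "m < k"
  shows "(\<Sum>r<k. (if m = r then 1 else 0) * f r) = f m"
  using assms by (simp add: if_distrib[of "\<lambda>x. x * _"] cong: if_cong)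

theorem lemma8:
  fixes d n L W :: nat and B :: real
    and ds :: "nat list" and ls :: "(mat \<times> vec) list"
  assumes "d \<ge> 1" and "n \<ge> 1"
    and "is_fnn ds ls L W (d * n) 1 B"
  shows "\<exists>WEB BEB ds0 ls0 heads ds1 ls1.
     is_fnn ds0 ls0 2 (2 * d * n) (d + n) (2 * d * n) (max B 1) \<and>
     length heads = 1 \<and> heads_bounded (2 * d * n) (d * n) heads (real n) \<and>
     is_fnn ds1 ls1 L (max W (2 * d * n)) (2 * d * n) 1 (max B 1) \<and>
     (\<forall>X. (\<forall>i<d. \<forall>j<n. 0 \<le> X i j \<and> X i j \<le> 1) \<longrightarrow>
        (\<forall>j<n. transformer1 (d + n) (2 * d * n) (d * n) n WEB BEB ds0 ls0 heads ds1 ls1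
                 (stack_input d X) 0 j
               = fnn_eval ds ls (flatten n X) 0))"
proof -
  define N where "N = d * n"
  have eqN: "2 * d * n = 2 * N" by (simp add: N_def)
  have Npos: "N \<ge> 1" using assms(1,2) by (simp add: N_def)
  note fnn = assms(3)[unfolded is_fnn_def]
  define WEB :: mat where "WEB = (\<lambda>i k. if i = k then 1 else 0)"
  define BEB :: mat where "BEB = (\<lambda>i j. 0)"
  define A0 :: mat where "A0 = (\<lambda>m r. if N \<le> m \<and> m < 2*N \<and> (r = (m-N) div n \<or> r = d + (m-N) mod n) then 1 else 0)"
  define A1 :: mat where "A1 = (\<lambda>m r. if m = r then 1 else 0)"
  define ds0 where "ds0 = [d+n, 2*N, 2*N]"
  define ls0 :: "(mat \<times> vec) list" where "ls0 = [(A0, \<lambda>_. 0), (A1, \<lambda>_. 0)]"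
  define WO :: mat where "WO = (\<lambda>i s. if i = s then real n else 0)"
  define WV :: mat where "WV = (\<lambda>s i. if i = N + s then 1 else 0)"
  define heads :: "(mat\<times>mat\<times>mat\<times>mat) list" where "heads = [(WO, WV, \<lambda>_ _. 0, \<lambda>_ _. 0)]"
  define ds1 where "ds1 = map (\<lambda>l. if l = 0 then 2*N else if l = L then 1 else max W (2*N)) [0..<L+1]"
  define ls1 where "ls1 = pad_layers ds ls"
  have L1: "L \<ge> 1" using fnn by simp
  have ent: "\<bar>fst (ls0 ! l) i j\<bar> \<le> 1 \<and> \<bar>snd (ls0 ! l) i\<bar> \<le> 1" if "l < 2" for l i j
  proof -
    have "l = 0 \<or> l = 1" using that by auto
    then show ?thesis by (elim disjE) (simp_all add: ls0_def A0_def A1_def)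
  qed
  have ff0: "is_fnn ds0 ls0 2 (2 * N) (d + n) (2 * N) (max B 1)"
    unfolding is_fnn_def
  proof (intro conjI allI impI)
    fix l i j assume "l < (2::nat)"
    show "\<bar>fst (ls0 ! l) i j\<bar> \<le> max B 1" using ent[OF \<open>l < 2\<close>, of i j] by linarith
    show "\<bar>snd (ls0 ! l) i\<bar> \<le> max B 1" using ent[OF \<open>l < 2\<close>, of i j] by linarith
  next
    fix l :: nat assume "0 < l \<and> l < 2" then have "l = 1" by auto
    then show "ds0 ! l = 2 * N" by (simp add: ds0_def)
  qed (simp_all add: ds0_def ls0_def)
  have hb: "heads_bounded (2 * N) N heads (real n)"
    unfolding heads_bounded_def heads_def using assms(2) by (auto simp: WO_def WV_def)
  have lenls: "length ls = L" and lends: "length ds = L + 1" using fnn by auto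
  have ds1_nth: "\<And>l. l < L + 1 \<Longrightarrow> ds1 ! l = (if l = 0 then 2*N else if l = L then 1 else max W (2*N))"
    unfolding ds1_def by (simp del: upt_Suc)
  have ff1: "is_fnn ds1 ls1 L (max W (2 * N)) (2 * N) 1 (max B 1)"
    unfolding is_fnn_def
  proof (intro conjI allI impI)
    show "1 \<le> L" by fact
    show "length ls1 = L" unfolding ls1_def using pad_len lenls lends by simp
    show "length ds1 = L + 1" unfolding ds1_def by simp
    show "ds1 ! 0 = 2 * N" using ds1_nth[of 0] L1 by simp
    show "ds1 ! L = 1" using ds1_nth[of L] L1 by simp
    fix l assume "0 < l \<and> l < L" then show "ds1 ! l = max W (2 * N)" using ds1_nth[of l] by simp
  next
    fix l i j assume l: "l < L" and i: "i < ds1 ! (l + 1)" and j: "j < ds1 ! l"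
    have pn: "ls1 ! l = ((\<lambda>i j. if i < ds!(l+1) \<and> j < ds!l then fst (ls!l) i j else 0),
                          (\<lambda>i. if i < ds!(l+1) then snd (ls!l) i else 0))"
      unfolding ls1_def using pad_nth lenls lends l by simp
    have bA: "\<And>i j. i < ds!(l+1) \<Longrightarrow> j < ds!l \<Longrightarrow> \<bar>fst (ls!l) i j\<bar> \<le> B"
      using fnn l by blast
    show "\<bar>fst (ls1 ! l) i j\<bar> \<le> max B 1" using bA by (auto simp: pn intro: le_max_iff_disj[THEN iffD2])
  next
    fix l i assume l: "l < L" and i: "i < ds1 ! (l + 1)"
    have pn: "ls1 ! l = ((\<lambda>i j. if i < ds!(l+1) \<and> j < ds!l then fst (ls!l) i j else 0),
                          (\<lambda>i. if i < ds!(l+1) then snd (ls!l) i else 0))"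
      unfolding ls1_def using pad_nth lenls lends l by simp
    have bb: "\<And>i. i < ds!(l+1) \<Longrightarrow> \<bar>snd (ls!l) i\<bar> \<le> B"
      using fnn l by blast
    show "\<bar>snd (ls1 ! l) i\<bar> \<le> max B 1" using bb by (auto simp: pn intro: le_max_iff_disj[THEN iffD2])
  qed
  have main: "transformer1 (d + n) (2 * N) N n WEB BEB ds0 ls0 heads ds1 ls1
                 (stack_input d X) 0 j = fnn_eval ds ls (flatten n X) 0"
    if X: "\<forall>i<d. \<forall>j<n. 0 \<le> X i j \<and> X i j \<le> 1" and j: "j < n" for X j
  proof -
    define E where "E = embed (d+n) WEB BEB (stack_input d X)"
    have E: "E r k = stack_input d X r k" if "r < d + n" for r k
      unfolding E_def embed_def WEB_def BEB_def using that
      by (simp add: if_distrib[of "\<lambda>x. x * _"] cong: if_cong)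
    define Z where "Z = ff_block ds0 ls0 E"
    have Z: "Z m k = (if N \<le> m \<and> m < 2*N \<and> (m-N) mod n = k then X ((m-N) div n) k else 0)"
      if m: "m < 2*N" and k: "k < n" for m k
    proof -
      define col where "col = (\<lambda>r. E r k)"
      have h: "relu (affine (d+n) A0 (\<lambda>_. 0) col m') =
         (if N \<le> m' \<and> m' < 2*N \<and> (m'-N) mod n = k then X ((m'-N) div n) k else 0)" for m'
      proof (cases "N \<le> m' \<and> m' < 2*N")
        case True
        define p where "p = m' - N"
        have p: "p < d * n" using True unfolding p_def N_def by linarith
        have a: "p div n < d" using p by (simp add: less_mult_imp_div_less)
        have b: "p mod n < n" using assms(2) by simp
        have "affine (d+n) A0 (\<lambda>_. 0) col m' = (\<Sum>r<d+n. (if r = p div n \<or> r = d + p mod n then 1 else 0) * col r)"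
          unfolding affine_def A0_def p_def using True by simp
        also have "\<dots> = col (p div n) + col (d + p mod n)"
          using a b by (intro sum_two) auto
        also have "\<dots> = X (p div n) k + ((if p mod n = k then 1 else 0) - 1)"
          unfolding col_def using a b by (simp add: E stack_input_def)
        finally have eq: "affine (d+n) A0 (\<lambda>_. 0) col m' = X (p div n) k + ((if p mod n = k then 1 else 0) - 1)" .
        have "0 \<le> X (p div n) k \<and> X (p div n) k \<le> 1" using X a k by blast
        then show ?thesis using True unfolding eq relu_def p_def[symmetric] by auto
      next
        case False
        then show ?thesis unfolding affine_def A0_def relu_def by auto
      qed
      have "Z m k = affine (2*N) A1 (\<lambda>_. 0) (\<lambda>i. relu (affine (d+n) A0 (\<lambda>_. 0) col i)) m"
        unfolding Z_def ff_block_def ds0_def ls0_def col_def by simp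
      also have "\<dots> = relu (affine (d+n) A0 (\<lambda>_. 0) col m)"
        unfolding affine_def A1_def using sum_delta_lt[OF m] by simp
      finally show ?thesis using h by simp
    qed
    define S where "S = self_attn (2*N) N n heads Z"
    have S: "S i j = flatten n X i" if i: "i < N" for i
    proof -
      have z0: "mmul (2*N) (\<lambda>_ _. 0) Z = (\<lambda>_ _. 0)" unfolding mmul_def by simp
      have sm: "softmax_col n (mmul N (transp (mmul (2*N) (\<lambda>_ _. 0) Z)) (mmul (2*N) (\<lambda>_ _. 0) Z))
               = (\<lambda>_ _. 1 / real n)"
        unfolding z0 transp_def mmul_def softmax_col_def by simp
      have V: "mmul (2*N) WV Z s l = Z (N+s) l" if "s < N" for s l
      proof -
        have "mmul (2*N) WV Z s l = (\<Sum>r<2*N. (if N + s = r then 1 else 0) * Z r l)"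
          unfolding mmul_def WV_def by (intro sum.cong) auto
        also have "\<dots> = Z (N+s) l" using that by (intro sum_delta_lt) simp
        finally show ?thesis .
      qed
      have O: "mmul N WO (mmul (2*N) WV Z) i l = real n * Z (N+i) l" for l
      proof -
        have "mmul N WO (mmul (2*N) WV Z) i l = (\<Sum>s<N. (if i = s then 1 else 0) * (real n * mmul (2*N) WV Z s l))"
          unfolding mmul_def WO_def by (intro sum.cong) auto
        also have "\<dots> = real n * mmul (2*N) WV Z i l" using i by (intro sum_delta_lt) simp
        finally show ?thesis using V[OF i] by simp
      qed
      have Zi: "Z i j = 0" using Z[of i j] i j by simp
      have "S i j = (\<Sum>l<n. (real n * Z (N+i) l) * (1 / real n))"
        unfolding S_def self_attn_def heads_def using Zi sm O by (simp add: mmul_def[of n])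
      also have "\<dots> = (\<Sum>l<n. Z (N+i) l)" using assms(2) by (intro sum.cong) auto
      also have "\<dots> = (\<Sum>l<n. if i mod n = l then X (i div n) l else 0)"
        using i by (intro sum.cong refl) (simp add: Z)
      also have "\<dots> = X (i div n) (i mod n)" using assms(2) by simp
      finally show ?thesis unfolding flatten_def .
    qed
    have "transformer1 (d + n) (2 * N) N n WEB BEB ds0 ls0 heads ds1 ls1
                 (stack_input d X) 0 j = fnn_eval ds1 ls1 (\<lambda>r. S r j) 0"
      unfolding transformer1_def S_def Z_def E_def ff_block_def by simp
    also have "\<dots> = fnn_eval ds ls (flatten n X) 0"
      unfolding ls1_def
    proof (rule pad_eval)
      show "length ds = length ls + 1" using lenls lends by simp
      show "length ds1 = length ds" using lends by (simp add: ds1_def)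
      show "\<forall>l<length ds. ds ! l \<le> ds1 ! l"
      proof (intro allI impI)
        fix l assume "l < length ds"
        hence l: "l < L + 1" using lends by simp
        show "ds ! l \<le> ds1 ! l"
        proof (cases "l = 0")
          case True then show ?thesis using fnn ds1_nth[OF l] by (simp add: N_def)
        next
          case False
          then show ?thesis using fnn ds1_nth[OF l] l by (cases "l = L") auto
        qed
      qed
      show "\<forall>ja<ds ! 0. S ja j = flatten n X ja" using S fnn by (simp add: N_def)
      have "ds \<noteq> []" using lends by auto
      then have "last ds = ds ! L" using lends by (simp add: last_conv_nth)
      then show "0 < last ds" using fnn by simp
    qed
    finally show ?thesis .
  qed
  show ?thesis unfolding eqN N_def[symmetric]
    apply (rule exI[of _ WEB], rule exI[of _ BEB], rule exI[of _ ds0], rule exI[of _ ls0],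
           rule exI[of _ heads], rule exI[of _ ds1], rule exI[of _ ls1])
    using ff0 hb ff1 main by (simp add: heads_def)
qed

end
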